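(* Let $\mathcal{X}$ be a measurable space, $K\ge 1$, and let classifiers be measurable maps $\mathcal{X}\to[K]=\{1,\dots,K\}$. Let $\mathcal{B}$ assign to each $x\in\mathcal{X}$ a set $\mathcal{B}(x)\subseteq\mathcal{X}$, and for $V\subseteq\mathcal{X}$ let $\mathcal{N}(V)=\{x\in\mathcal{X}:\exists x'\in V \text{ with } \mathcal{B}(x)\cap\mathcal{B}(x')\neq\emptyset\}$. Fix a classifier $G_{pl}$ (the pseudo-labeler). Let $Q$ be a probability measure on $\mathcal{X}$ satisfying the $c$-expansion property for a non-increasing function $c:[0,1]\to(0,\infty)$, i.e. $Q(\mathcal{N}(S))\ge c(Q(S))\,Q(S)$ for every measurable $S\subseteq\mathcal{X}$. Let $H$ be a classifier and put $\gamma_H=c\big(Q(\{x\in\mathcal{X}:G_{pl}(x)\neq H(x)\})\big)$, and assume $\gamma_H>1$. For a classifier $F$ let $\mathcal{S}_{\mathcal{B}}(F)=\{x\in\mathcal{X}: F(x)=F(x')\ \forall x'\in\mathcal{B}(x)\}$ and let $\mathcal{S}_{\mathcal{B}}^c(F)$ be its complement. For a classifier $F$ define $$\mathcal{L}_{Q,H}(F)=\frac{\gamma_H+1}{\gamma_H-1}Q(\{x:F(x)\neq G_{pl}(x)\})+\frac{2\gamma_H}{\gamma_H-1}Q(\mathcal{S}_{\mathcal{B}}^c(F))+\frac{2\gamma_H}{\gamma_H-1}Q(\mathcal{S}_{\mathcal{B}}^c(H))-Q(\{x:G_{pl}(x)\neq H(x)\}).$$ Then for every classifier $F$, $Q(\{x\in\mathcal{X}:F(x)\neq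 H(x)\})\le\mathcal{L}_{Q,H}(F)$.
   Context: All sets considered are assumed measurable. $\mathcal{B}(x)$ is interpreted as the set of (augmented) neighbors of $x$; $\mathcal{N}(V)$ is the neighborhood of a set $V$. *)

theory Defs
  imports "HOL-Probability.Probability"
begin

definition classifier :: "'a measure \<Rightarrow> nat \<Rightarrow> ('a \<Rightarrow> nat) \<Rightarrow> bool" where
  "classifier M K F \<longleftrightarrow> F \<in> M \<rightarrow>\<^sub>M count_space {1..K}"

definition nbhd :: "'a measure \<Rightarrow> ('a \<Rightarrow> 'a set) \<Rightarrow> 'a set \<Rightarrow> 'a set" where
  "nbhd M B V = {x \<in> space M. \<exists>x'\<in>V. B x \<inter> B x' \<noteq> {}}"

definition robust_set :: "'a measure \<Rightarrow> ('a \<Rightarrow> 'a set) \<Rightarrow> ('a \<Rightarrow> nat) \<Rightarrow> 'a set" where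
  "robust_set M B F = {x \<in> space M. \<forall>x'\<in>B x. F x = F x'}"

definition c_expansion :: "'a measure \<Rightarrow> ('a \<Rightarrow> 'a set) \<Rightarrow> (real \<Rightarrow> real) \<Rightarrow> bool" where
  "c_expansion M B c \<longleftrightarrow>
     (\<forall>S \<in> sets M. measure M (nbhd M B S) \<ge> c (measure M S) * measure M S)"

definition disagree :: "'a measure \<Rightarrow> ('a \<Rightarrow> nat) \<Rightarrow> ('a \<Rightarrow> nat) \<Rightarrow> 'a set" where
  "disagree M F G = {x \<in> space M. F x \<noteq> G x}"

definition LQH :: "'a measure \<Rightarrow> ('a \<Rightarrow> 'a set) \<Rightarrow> real \<Rightarrow> ('a \<Rightarrow> nat) \<Rightarrow> ('a \<Rightarrow> nat)
    \<Rightarrow> ('a \<Rightarrow> nat) \<Rightarrow> real" where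
  "LQH M B \<gamma> Gpl H F =
     (\<gamma> + 1) / (\<gamma> - 1) * measure M (disagree M F Gpl)
   + 2 * \<gamma> / (\<gamma> - 1) * measure M (space M - robust_set M B F)
   + 2 * \<gamma> / (\<gamma> - 1) * measure M (space M - robust_set M B H)
   - measure M (disagree M Gpl H)"

end

theory Submission
  imports Defs
begin

lemma meq: fixes f1 f2 :: "'a \<Rightarrow> nat" and P1 :: "nat \<Rightarrow> nat \<Rightarrow> bool"
  assumes "f1 \<in> measurable Q (count_space {1..K})" "f2 \<in> measurable Q (count_space {1..K})"
  shows "{x \<in> space Q. P1 (f1 x) (f2 x)} \<in> sets Q"
proof -
  have m1: "(\<lambda>x. (f1 x, f2 x)) \<in> measurable Q (count_space {1..K} \<Otimes>\<^sub>M count_space {1..K})"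
    using assms by (rule measurable_Pair)
  have m2: "(\<lambda>x. (f1 x, f2 x)) \<in> measurable Q (count_space ({1..K} \<times> {1..K}))"
    using m1 by (simp add: pair_measure_countable)
  have m3: "(\<lambda>p. P1 (fst p) (snd p)) \<in> measurable (count_space ({1..K} \<times> {1..K})) (count_space UNIV)"
    by simp
  have m4: "(\<lambda>x. P1 (f1 x) (f2 x)) \<in> measurable Q (count_space UNIV)"
    using measurable_comp[OF m2 m3] by (simp add: o_def)
  have "(\<lambda>x. P1 (f1 x) (f2 x)) -` {True} \<inter> space Q \<in> sets Q"
    using measurable_sets[OF m4] by simp
  moreover have "(\<lambda>x. P1 (f1 x) (f2 x)) -` {True} \<inter> space Q = {x \<in> space Q. P1 (f1 x) (f2 x)}" by auto
  ultimately show ?thesis by simp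
qed

theorem mainTheorem1:
  fixes Q :: "'a measure" and K :: nat and B :: "'a \<Rightarrow> 'a set"
    and Gpl H :: "'a \<Rightarrow> nat" and c :: "real \<Rightarrow> real"
  assumes "prob_space Q"
    and "K \<ge> 1"
    and "\<And>x. x \<in> space Q \<Longrightarrow> B x \<subseteq> space Q"
    and meas_nbhd: "\<And>S. S \<in> sets Q \<Longrightarrow> nbhd Q B S \<in> sets Q"
    and meas_robust: "\<And>F. classifier Q K F \<Longrightarrow> robust_set Q B F \<in> sets Q"
    and "classifier Q K Gpl"
    and "\<And>t. t \<in> {0..1} \<Longrightarrow> c t > 0"
    and "\<And>s t. s \<in> {0..1} \<Longrightarrow> t \<in> {0..1} \<Longrightarrow> s \<le> t \<Longrightarrow> c t \<le> c s"
    and "c_expansion Q B c"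
    and "classifier Q K H"
    and "c (measure Q (disagree Q Gpl H)) > 1"
  shows "\<forall>F. classifier Q K F \<longrightarrow>
           measure Q (disagree Q F H)
             \<le> LQH Q B (c (measure Q (disagree Q Gpl H))) Gpl H F"
proof (intro allI impI)
  fix F assume cF: "classifier Q K F"
  interpret P: prob_space Q by fact
  define g where "g = c (measure Q (disagree Q Gpl H))"
  have g1: "g > 1" using assms(11) g_def by simp
  have mF: "F \<in> measurable Q (count_space {1..K})" using cF classifier_def by blast
  have mG: "Gpl \<in> measurable Q (count_space {1..K})" using assms(6) classifier_def by blast
  have mH: "H \<in> measurable Q (count_space {1..K})" using assms(10) classifier_def by blast
  define A where "A = disagree Q F H"
  define Gd where "Gd = disagree Q Gpl H"
  define A1 where "A1 = {x \<in> space Q. F x \<noteq> H x \<and> Gpl x = H x}"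
  define A2 where "A2 = {x \<in> space Q. Gpl x \<noteq> H x \<and> F x = H x}"
  define D where "D = space Q"
  define R where "R = robust_set Q B F \<inter> robust_set Q B H"
  define U where "U = A \<inter> Gd \<inter> R"
  have sA: "A \<in> sets Q" unfolding A_def disagree_def using meq[OF mF mH] .
  have sGd: "Gd \<in> sets Q" unfolding Gd_def disagree_def using meq[OF mG mH] .
  have sFG: "disagree Q F Gpl \<in> sets Q" unfolding disagree_def using meq[OF mF mG] .
  have sA1: "A1 \<in> sets Q"
  proof -
    have "A1 = A - Gd" unfolding A1_def A_def Gd_def disagree_def by auto
    thus ?thesis using sA sGd by auto
  qed
  have sA2: "A2 \<in> sets Q"
  proof -
    have "A2 = Gd - A" unfolding A2_def A_def Gd_def disagree_def by auto
    thus ?thesis using sA sGd by auto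
  qed
  have sRF: "robust_set Q B F \<in> sets Q" using meas_robust cF by blast
  have sRH: "robust_set Q B H \<in> sets Q" using meas_robust assms(10) by blast
  have sR: "R \<in> sets Q" unfolding R_def using sRF sRH by auto
  have sU: "U \<in> sets Q" unfolding U_def using sA sGd sR by auto
  have sN: "nbhd Q B U \<in> sets Q" using meas_nbhd sU by blast
  have RD: "R \<subseteq> D" unfolding R_def D_def robust_set_def by auto
  have uGd: "measure Q U \<le> measure Q Gd" unfolding U_def
    by (rule P.finite_measure_mono) (auto simp: sGd)
  have cU: "c (measure Q U) \<ge> g" unfolding g_def Gd_def[symmetric]
    using assms(8)[of "measure Q U" "measure Q Gd"] uGd by auto
  have exp: "measure Q (nbhd Q B U) \<ge> c (measure Q U) * measure Q U"
    using assms(9) sU unfolding c_expansion_def by blast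
  have st1: "measure Q (nbhd Q B U) \<ge> g * measure Q U"
    using exp cU mult_right_mono[OF cU, of "measure Q U"] by auto
  have incl: "nbhd Q B U \<subseteq> (A \<inter> R) \<union> (D - R)"
  proof
    fix x assume x: "x \<in> nbhd Q B U"
    then obtain x' z where x': "x' \<in> U" and z: "z \<in> B x" "z \<in> B x'" and xs: "x \<in> D"
      unfolding nbhd_def D_def by blast
    show "x \<in> (A \<inter> R) \<union> (D - R)"
    proof (cases "x \<in> R")
      case True
      have "F x = F z" "H x = H z" using True z unfolding R_def robust_set_def by auto
      moreover have "F x' = F z" "H x' = H z" "F x' \<noteq> H x'"
        using x' z unfolding U_def R_def robust_set_def A_def disagree_def by auto
      ultimately show ?thesis using True xs unfolding A_def disagree_def D_def by auto
    qed (use xs in auto)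
  qed
  have st2: "measure Q (nbhd Q B U) \<le> measure Q (A \<inter> R) + measure Q (D - R)"
  proof -
    have "measure Q (nbhd Q B U) \<le> measure Q ((A \<inter> R) \<union> (D - R))"
      using incl sA sR by (intro P.finite_measure_mono) (auto simp: D_def)
    also have "\<dots> \<le> measure Q (A \<inter> R) + measure Q (D - R)"
      using sA sR by (intro measure_Un_le) (auto simp: D_def)
    finally show ?thesis .
  qed
  have st3: "measure Q (A \<inter> R) \<le> measure Q U + measure Q A1"
  proof -
    have "A \<inter> R \<subseteq> U \<union> A1" unfolding U_def A1_def A_def Gd_def disagree_def by auto
    hence "measure Q (A \<inter> R) \<le> measure Q (U \<union> A1)"
      using sU sA1 by (intro P.finite_measure_mono) auto
    also have "\<dots> \<le> measure Q U + measure Q A1"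
      using sU sA1 by (intro measure_Un_le) auto
    finally show ?thesis .
  qed
  have st4: "measure Q (A \<inter> Gd) \<le> measure Q U + measure Q (D - R)"
  proof -
    have "A \<inter> Gd \<subseteq> U \<union> (D - R)" unfolding U_def D_def A_def disagree_def by auto
    hence "measure Q (A \<inter> Gd) \<le> measure Q (U \<union> (D - R))"
      using sU sR by (intro P.finite_measure_mono) (auto simp: D_def)
    also have "\<dots> \<le> measure Q U + measure Q (D - R)"
      using sU sR by (intro measure_Un_le) (auto simp: D_def)
    finally show ?thesis .
  qed
  have st5a: "measure Q A = measure Q (A \<inter> Gd) + measure Q A1"
  proof -
    have "A = (A \<inter> Gd) \<union> A1" "(A \<inter> Gd) \<inter> A1 = {}"
      unfolding A1_def A_def Gd_def disagree_def by auto
    thus ?thesis using sA sGd sA1 P.finite_measure_Union[of "A \<inter> Gd" A1] by auto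
  qed
  have st5b: "measure Q Gd = measure Q (A \<inter> Gd) + measure Q A2"
  proof -
    have "Gd = (A \<inter> Gd) \<union> A2" "(A \<inter> Gd) \<inter> A2 = {}"
      unfolding A2_def A_def Gd_def disagree_def by auto
    thus ?thesis using sA sGd sA2 P.finite_measure_Union[of "A \<inter> Gd" A2] by auto
  qed
  have st6: "measure Q A1 + measure Q A2 \<le> measure Q (disagree Q F Gpl)"
  proof -
    have "A1 \<inter> A2 = {}" unfolding A1_def A2_def by auto
    hence "measure Q A1 + measure Q A2 = measure Q (A1 \<union> A2)"
      using sA1 sA2 P.finite_measure_Union by auto
    also have "\<dots> \<le> measure Q (disagree Q F Gpl)"
      using sFG by (intro P.finite_measure_mono) (auto simp: A1_def A2_def disagree_def)
    finally show ?thesis .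
  qed
  have st7: "measure Q (D - R) \<le> measure Q (D - robust_set Q B F) + measure Q (D - robust_set Q B H)"
  proof -
    have "D - R = (D - robust_set Q B F) \<union> (D - robust_set Q B H)" unfolding R_def by auto
    thus ?thesis using sRF sRH by (auto simp: D_def intro!: measure_Un_le)
  qed
  define u where "u = measure Q U"
  define p where "p = measure Q (A \<inter> Gd)"
  define r' where "r' = measure Q (D - R)"
  define a1 where "a1 = measure Q A1"
  define a2 where "a2 = measure Q A2"
  define a where "a = measure Q (disagree Q F Gpl)"
  define sF where "sF = measure Q (D - robust_set Q B F)"
  define sH where "sH = measure Q (D - robust_set Q B H)"
  define q where "q = measure Q A"
  define d where "d = measure Q Gd"
  have e1: "(g - 1) * u \<le> a1 + r'" using st1 st2 st3 unfolding u_def a1_def r'_def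
    by (simp add: algebra_simps)
  have e2: "(g - 1) * p \<le> (g - 1) * (u + r')"
    using st4 g1 unfolding p_def u_def r'_def by (intro mult_left_mono) auto
  have r0: "r' \<ge> 0" unfolding r'_def by simp
  have a10: "a1 \<ge> 0" "a2 \<ge> 0" unfolding a1_def a2_def by auto
  have e3: "(g - 1) * p \<le> a1 + g * r'" using e1 e2 by (simp add: algebra_simps)
  have qd: "q + d = 2 * p + a1 + a2" using st5a st5b unfolding q_def d_def p_def a1_def a2_def by simp
  have e4: "(g - 1) * a2 \<le> (g - 1) * (a - a1)"
    using st6 g1 unfolding a_def a1_def a2_def by (intro mult_left_mono) auto
  have e5: "g * r' \<le> g * (sF + sH)"
    using st7 g1 unfolding r'_def sF_def sH_def by (intro mult_left_mono) auto
  have a1a: "a1 \<le> a" using st6 measure_nonneg[of Q A2] unfolding a_def a1_def a2_def by linarith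
  have e6: "(g - 1) * (q + d) \<le> (g + 1) * a + 2 * g * (sF + sH)"
    using e3 e4 e5 qd a1a g1 by (simp add: algebra_simps)
  have goal: "q \<le> (g + 1) / (g - 1) * a + 2 * g / (g - 1) * sF + 2 * g / (g - 1) * sH - d"
  proof -
    have gp: "g - 1 > 0" using g1 by simp
    have eq: "(g + 1) / (g - 1) * a + 2 * g / (g - 1) * sF + 2 * g / (g - 1) * sH - d
       = ((g + 1) * a + 2 * g * (sF + sH) - (g - 1) * d) / (g - 1)"
    proof -
      define k where "k = 1 / (g - 1)"
      have kk: "(g - 1) * k = 1" using gp by (simp add: k_def)
      have l: "(g + 1) / (g - 1) * a + 2 * g / (g - 1) * sF + 2 * g / (g - 1) * sH - d
         = (g + 1) * k * a + 2 * g * k * sF + 2 * g * k * sH - d" by (simp add: k_def)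
      have r: "((g + 1) * a + 2 * g * (sF + sH) - (g - 1) * d) / (g - 1)
         = ((g + 1) * a + 2 * g * (sF + sH) - (g - 1) * d) * k" by (simp add: k_def)
      have "(g + 1) * k * a + 2 * g * k * sF + 2 * g * k * sH - d
         = ((g + 1) * a + 2 * g * (sF + sH) - (g - 1) * d) * k" using kk by algebra
      thus ?thesis using l r by simp
    qed
    have "(g - 1) * q \<le> (g + 1) * a + 2 * g * (sF + sH) - (g - 1) * d"
      using e6 by (simp add: algebra_simps)
    hence "q \<le> ((g + 1) * a + 2 * g * (sF + sH) - (g - 1) * d) / (g - 1)"
      using gp by (simp add: pos_le_divide_eq mult.commute)
    thus ?thesis using eq by simp
  qed
  show "measure Q (disagree Q F H) \<le> LQH Q B g Gpl H F"
    using goal unfolding LQH_def q_def A_def a_def sF_def sH_def d_def Gd_def D_def .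
qed

end
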